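(* Let $(E,\langle\cdot,\cdot\rangle,\rho)$ be a Courant vector bundle over $M$. For any two pre-Courant algebroid structures $\circ$ and $\tilde\circ$ on it, the associated Lie 2-algebras are isomorphic.
   Context: A Courant vector bundle over a smooth manifold $M$ is a vector bundle $E\to M$ with a fibrewise nondegenerate symmetric bilinear form $\langle\cdot,\cdot\rangle$ and a bundle map $\rho:E\to TM$ such that $\rho\circ\rho^*=0$, where $\rho^*:T^*M\to E^*\cong E$ is the dual of $\rho$ followed by the identification $E^*\cong E$ via $\langle\cdot,\cdot\rangle$. A pre-Courant algebroid structure on it is an $\mathbb R$-bilinear operation $\circ$ on $\Gamma(E)$ such that for all $e_1,e_2,e_3\in\Gamma(E)$: (i) $\rho(e_1\circ e_2)=[\rho(e_1),\rho(e_2)]$; (ii) $\langle e_1\circ e_1,e_2\rangle=\frac12\rho(e_2)\langle e_1,e_1\rangle$; (iii) $\rho(e_1)\langle e_2,e_3\rangle=\langle e_1\circ e_2,e_3\rangle+\langle e_2,e_1\circ e_3\rangle$. The Lie 2-algebra associated to $(E,\langle\cdot,\cdot\rangle,\rho,\circ)$ is the complex $\Gamma(\operatorname{Ker}\rho)\xrightarrow{i}\Gamma(E)$ ($i$ inclusion) with $l_2(e_1,e_2)=[\![e_1,e_2]\!]:=\frac12(e_1\circ e_2-e_2\circ e_1)$, $l_2(e,\kappa)=[\![e,\kappa]\!]=-l_2(\kappa,e)$ ($e\in\Gamma(E)$, $\kappa\in\Gamma(\operatorname{Ker}\rho)$), and $l_3(e_1,e_2,e_3)=[\![e_1,[\![e_2,e_3]\!]]\!]+[\![e_2,[\![e_3,e_1]\!]]\!]+[\![e_3,[\![e_1,e_2]\!]]\!]$.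 For two such structures $(V_1\xrightarrow{d}V_0,l_2,l_3)$ and $(V_1'\xrightarrow{d'}V_0',l_2',l_3')$, an isomorphism consists of bijective linear maps $f_0:V_0\to V_0'$, $f_1:V_1\to V_1'$ with $f_0\circ d=d'\circ f_1$ and a bilinear map $f_2:V_0\times V_0\to V_1'$ such that for all $x,y,z\in V_0$, $m\in V_1$: $l_2'(f_0x,f_0y)-f_0l_2(x,y)=d'f_2(x,y)$; $l_2'(f_0x,f_1m)-f_1l_2(x,m)=f_2(x,dm)$; $l_2'(f_1m,f_0x)-f_1l_2(m,x)=f_2(dm,x)$; and $f_1(l_3(x,y,z))+l_2'(f_0x,f_2(y,z))-l_2'(f_0y,f_2(x,z))-l_2'(f_2(x,y),f_0z)-f_2(l_2(x,y),z)+f_2(x,l_2(y,z))-f_2(y,l_2(x,z))-l_3'(f_0x,f_0y,f_0z)=0$. *)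

theory Defs
  imports Main "HOL.Real_Vector_Spaces"
begin

text \<open>Algebraic model of a Courant vector bundle (E, pairing, rho) over M.
  'f plays the role of C^\<infinity>(M) (a commutative real algebra), 'e the role of
  the space of sections Gamma(E) (a real vector space and 'f-module via smul),
  vector fields are derivations of C^\<infinity>(M), i.e. maps 'f \<Rightarrow> 'f, and the
  Lie bracket of vector fields is the commutator of derivations.\<close>

definition vf_bracket :: "('f::ab_group_add \<Rightarrow> 'f) \<Rightarrow> ('f \<Rightarrow> 'f) \<Rightarrow> ('f \<Rightarrow> 'f)" where
  "vf_bracket X Y = (\<lambda>f. X (Y f) - Y (X f))"

definition is_derivation :: "('f::{comm_ring_1,real_algebra_1} \<Rightarrow> 'f) \<Rightarrow> bool" where
  "is_derivation X \<longleftrightarrow>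
     (\<forall>f g. X (f + g) = X f + X g) \<and> (\<forall>r f. X (r *\<^sub>R f) = r *\<^sub>R X f) \<and>
     (\<forall>f g. X (f * g) = f * X g + g * X f)"

definition courant_vector_bundle ::
  "('f::{comm_ring_1,real_algebra_1} \<Rightarrow> 'e::real_vector \<Rightarrow> 'e) \<Rightarrow> ('e \<Rightarrow> 'e \<Rightarrow> 'f) \<Rightarrow> ('e \<Rightarrow> 'f \<Rightarrow> 'f) \<Rightarrow> bool" where
  "courant_vector_bundle smul ip rho \<longleftrightarrow>
     \<comment> \<open>Gamma(E) is a C^\<infinity>(M)-module compatible with its real structure\<close>
     (\<forall>a b e. smul (a * b) e = smul a (smul b e)) \<and> (\<forall>e. smul 1 e = e) \<and>
     (\<forall>a b e. smul (a + b) e = smul a e + smul b e) \<and>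
     (\<forall>a e e'. smul a (e + e') = smul a e + smul a e') \<and>
     (\<forall>r e. smul (of_real r) e = r *\<^sub>R e) \<and>
     \<comment> \<open>pairing: symmetric, C^\<infinity>(M)-bilinear\<close>
     (\<forall>e e'. ip e e' = ip e' e) \<and>
     (\<forall>e e' e''. ip (e + e') e'' = ip e e'' + ip e' e'') \<and>
     (\<forall>a e e'. ip (smul a e) e' = a * ip e e') \<and>
     \<comment> \<open>nondegenerate: the induced map Gamma(E) \<rightarrow> Gamma(E^*) is bijective\<close>
     (\<forall>e. (\<forall>e'. ip e e' = 0) \<longrightarrow> e = 0) \<and>
     (\<forall>\<phi>::'e \<Rightarrow> 'f. (\<forall>e e'. \<phi> (e + e') = \<phi> e + \<phi> e') \<and> (\<forall>a e. \<phi> (smul a e) = a * \<phi> e)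
         \<longrightarrow> (\<exists>e0. \<forall>e. ip e0 e = \<phi> e)) \<and>
     \<comment> \<open>anchor: C^\<infinity>(M)-linear, valued in vector fields (derivations)\<close>
     (\<forall>e. is_derivation (rho e)) \<and>
     (\<forall>e e'. rho (e + e') = (\<lambda>f. rho e f + rho e' f)) \<and>
     (\<forall>a e. rho (smul a e) = (\<lambda>f. a * rho e f)) \<and>
     \<comment> \<open>rho \<circ> rho^* = 0: for every f, the section rho^*(df), characterised by
        pairing(rho^*(df), e) = (df)(rho e) = rho(e) f, lies in Ker rho\<close>
     (\<forall>f e0. (\<forall>e. ip e0 e = rho e f) \<longrightarrow> rho e0 = (\<lambda>g. 0))"

definition pre_courant ::
  "('f::{comm_ring_1,real_algebra_1} \<Rightarrow> 'e::real_vector \<Rightarrow> 'e) \<Rightarrow> ('e \<Rightarrow> 'e \<Rightarrow> 'f) \<Rightarrow> ('e \<Rightarrow> 'f \<Rightarrow> 'f)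
    \<Rightarrow> ('e \<Rightarrow> 'e \<Rightarrow> 'e) \<Rightarrow> bool" where
  "pre_courant smul ip rho circ \<longleftrightarrow>
     \<comment> \<open>R-bilinear\<close>
     (\<forall>a b c. circ (a + b) c = circ a c + circ b c) \<and>
     (\<forall>a b c. circ a (b + c) = circ a b + circ a c) \<and>
     (\<forall>r a b. circ (r *\<^sub>R a) b = r *\<^sub>R circ a b) \<and>
     (\<forall>r a b. circ a (r *\<^sub>R b) = r *\<^sub>R circ a b) \<and>
     \<comment> \<open>(i)\<close>
     (\<forall>e1 e2. rho (circ e1 e2) = vf_bracket (rho e1) (rho e2)) \<and>
     \<comment> \<open>(ii)\<close>
     (\<forall>e1 e2. ip (circ e1 e1) e2 = (1/2) *\<^sub>R rho e2 (ip e1 e1)) \<and>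
     \<comment> \<open>(iii)\<close>
     (\<forall>e1 e2 e3. rho e1 (ip e2 e3) = ip (circ e1 e2) e3 + ip e2 (circ e1 e3))"

definition lie2_bracket :: "('e::real_vector \<Rightarrow> 'e \<Rightarrow> 'e) \<Rightarrow> 'e \<Rightarrow> 'e \<Rightarrow> 'e" where
  "lie2_bracket circ e1 e2 = (1/2) *\<^sub>R (circ e1 e2 - circ e2 e1)"

definition lie2_l3 :: "('e::real_vector \<Rightarrow> 'e \<Rightarrow> 'e) \<Rightarrow> 'e \<Rightarrow> 'e \<Rightarrow> 'e \<Rightarrow> 'e" where
  "lie2_l3 circ e1 e2 e3 =
     lie2_bracket circ e1 (lie2_bracket circ e2 e3) + lie2_bracket circ e2 (lie2_bracket circ e3 e1)
     + lie2_bracket circ e3 (lie2_bracket circ e1 e2)"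

definition linear_on :: "'a::real_vector set \<Rightarrow> ('a \<Rightarrow> 'b::real_vector) \<Rightarrow> bool" where
  "linear_on V f \<longleftrightarrow> (\<forall>x\<in>V. \<forall>y\<in>V. f (x + y) = f x + f y) \<and> (\<forall>r. \<forall>x\<in>V. f (r *\<^sub>R x) = r *\<^sub>R f x)"

text \<open>Isomorphism of 2-term structures (V1 -d-> V0, l2, l3); l2 is given by its three
  components V0\<times>V0\<rightarrow>V0 (b00), V0\<times>V1\<rightarrow>V1 (b01), V1\<times>V0\<rightarrow>V1 (b10).\<close>
definition lie2_isomorphic ::
  "'a0::real_vector set \<Rightarrow> 'a1::real_vector set \<Rightarrow> ('a1 \<Rightarrow> 'a0) \<Rightarrow> ('a0 \<Rightarrow> 'a0 \<Rightarrow> 'a0) \<Rightarrow>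
   ('a0 \<Rightarrow> 'a1 \<Rightarrow> 'a1) \<Rightarrow> ('a1 \<Rightarrow> 'a0 \<Rightarrow> 'a1) \<Rightarrow> ('a0 \<Rightarrow> 'a0 \<Rightarrow> 'a0 \<Rightarrow> 'a1) \<Rightarrow>
   'b0::real_vector set \<Rightarrow> 'b1::real_vector set \<Rightarrow> ('b1 \<Rightarrow> 'b0) \<Rightarrow> ('b0 \<Rightarrow> 'b0 \<Rightarrow> 'b0) \<Rightarrow>
   ('b0 \<Rightarrow> 'b1 \<Rightarrow> 'b1) \<Rightarrow> ('b1 \<Rightarrow> 'b0 \<Rightarrow> 'b1) \<Rightarrow> ('b0 \<Rightarrow> 'b0 \<Rightarrow> 'b0 \<Rightarrow> 'b1) \<Rightarrow> bool" where
  "lie2_isomorphic V0 V1 d b00 b01 b10 l3 V0' V1' d' b00' b01' b10' l3' \<longleftrightarrow>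
   (\<exists>f0 f1 f2.
      bij_betw f0 V0 V0' \<and> bij_betw f1 V1 V1' \<and> linear_on V0 f0 \<and> linear_on V1 f1 \<and>
      (\<forall>m\<in>V1. f0 (d m) = d' (f1 m)) \<and>
      (\<forall>x\<in>V0. \<forall>y\<in>V0. f2 x y \<in> V1') \<and>
      (\<forall>y\<in>V0. linear_on V0 (\<lambda>x. f2 x y)) \<and> (\<forall>x\<in>V0. linear_on V0 (\<lambda>y. f2 x y)) \<and>
      (\<forall>x\<in>V0. \<forall>y\<in>V0. b00' (f0 x) (f0 y) - f0 (b00 x y) = d' (f2 x y)) \<and>
      (\<forall>x\<in>V0. \<forall>m\<in>V1. b01' (f0 x) (f1 m) - f1 (b01 x m) = f2 x (d m)) \<and>
      (\<forall>x\<in>V0. \<forall>m\<in>V1. b10' (f1 m) (f0 x) - f1 (b10 m x) = f2 (d m) x) \<and>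
      (\<forall>x\<in>V0. \<forall>y\<in>V0. \<forall>z\<in>V0.
         f1 (l3 x y z) + b01' (f0 x) (f2 y z) - b01' (f0 y) (f2 x z) - b10' (f2 x y) (f0 z)
         - f2 (b00 x y) z + f2 x (b00 y z) - f2 y (b00 x z) - l3' (f0 x) (f0 y) (f0 z) = 0))"

text \<open>The Lie 2-algebra associated to a pre-Courant structure: V0 = Gamma(E) (all sections),
  V1 = Gamma(Ker rho), d = inclusion.\<close>
definition lie2_of :: "('e::real_vector \<Rightarrow> 'f \<Rightarrow> 'f::zero) \<Rightarrow> ('e \<Rightarrow> 'e \<Rightarrow> 'e) \<Rightarrow>
    'e set \<times> 'e set \<times> ('e \<Rightarrow> 'e) \<times> ('e \<Rightarrow> 'e \<Rightarrow> 'e) \<times> ('e \<Rightarrow> 'e \<Rightarrow> 'e) \<times> ('e \<Rightarrow> 'e \<Rightarrow> 'e) \<times> ('e \<Rightarrow> 'e \<Rightarrow> 'e \<Rightarrow> 'e)" where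
  "lie2_of rho circ = (UNIV, {e. rho e = (\<lambda>f. 0)}, (\<lambda>e. e), lie2_bracket circ, lie2_bracket circ,
     (\<lambda>k e. - lie2_bracket circ e k), lie2_l3 circ)"

end

theory Submission
  imports Defs
begin

lemma jac_identity:
  fixes B D :: "'a::real_vector \<Rightarrow> 'a \<Rightarrow> 'a"
  assumes Badd: "\<And>x y z. B x (y + z) = B x y + B x z"
    and Bneg: "\<And>x y. B x (- y) = - B x y"
    and Bas: "\<And>x y. B y x = - B x y"
    and Dadd: "\<And>x y z. D x (y + z) = D x y + D x z"
    and Dneg: "\<And>x y. D x (- y) = - D x y"
    and Das: "\<And>x y. D y x = - D x y"
  shows "(B x (B y z) + B y (B z x) + B z (B x y))
       + (B x (D y z) + D x (D y z)) - (B y (D x z) + D y (D x z)) + (B z (D x y) + D z (D x y))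
       - D (B x y) z + D x (B y z) - D y (B x z)
       - ((B x (B y z + D y z) + D x (B y z + D y z)) + (B y (B z x + D z x) + D y (B z x + D z x))
          + (B z (B x y + D x y) + D z (B x y + D x y))) = 0"
proof -
  have 1: "D x z = - D z x" by (rule Das)
  have 2: "D (B x y) z = - D z (B x y)" by (rule Das)
  have 3: "B x z = - B z x" by (rule Bas)
  show ?thesis unfolding 1 2 3 by (simp add: Badd Bneg Dadd Dneg algebra_simps)
qed

theorem corollary4p9:
  fixes smul :: "'f::{comm_ring_1,real_algebra_1} \<Rightarrow> 'e::real_vector \<Rightarrow> 'e"
    and ip :: "'e \<Rightarrow> 'e \<Rightarrow> 'f" and rho :: "'e \<Rightarrow> 'f \<Rightarrow> 'f"
    and circ circ' :: "'e \<Rightarrow> 'e \<Rightarrow> 'e"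
  assumes "courant_vector_bundle smul ip rho"
    and "pre_courant smul ip rho circ"
    and "pre_courant smul ip rho circ'"
  shows "case lie2_of rho circ of (V0, V1, d, b00, b01, b10, l3) \<Rightarrow>
         case lie2_of rho circ' of (V0', V1', d', b00', b01', b10', l3') \<Rightarrow>
           lie2_isomorphic V0 V1 d b00 b01 b10 l3 V0' V1' d' b00' b01' b10' l3'"
proof -
  define D where "D = (\<lambda>x y. circ' x y - circ x y)"
  define B where "B = lie2_bracket circ"
  note cvb = assms(1)[unfolded courant_vector_bundle_def]
  note pc = assms(2)[unfolded pre_courant_def]
  note pc' = assms(3)[unfolded pre_courant_def]
  have ipadd: "\<And>a b c. ip (a + b) c = ip a c + ip b c" using cvb by blast
  have ipsub: "ip (a - b) c = ip a c - ip b c" for a b c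
    using ipadd[of "a - b" b c] by (simp add: algebra_simps)
  have nondeg: "\<And>e. (\<forall>e'. ip e e' = 0) \<Longrightarrow> e = 0" using cvb by blast
  have rhoadd: "\<And>e e'. rho (e + e') = (\<lambda>f. rho e f + rho e' f)" using cvb by blast
  have rhosub: "rho (a - b) f = rho a f - rho b f" for a b f
    using fun_cong[OF rhoadd[of "a - b" b], of f] by (simp add: algebra_simps)
  have c1: "\<And>a b c. circ (a + b) c = circ a c + circ b c"
   and c2: "\<And>a b c. circ a (b + c) = circ a b + circ a c"
   and c3: "\<And>r a b. circ (r *\<^sub>R a) b = r *\<^sub>R circ a b"
   and c4: "\<And>r a b. circ a (r *\<^sub>R b) = r *\<^sub>R circ a b"
   and ci: "\<And>e1 e2. rho (circ e1 e2) = vf_bracket (rho e1) (rho e2)"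
   and cii: "\<And>e1 e2. ip (circ e1 e1) e2 = (1/2) *\<^sub>R rho e2 (ip e1 e1)"
    using pc by blast+
  have d1: "\<And>a b c. circ' (a + b) c = circ' a c + circ' b c"
   and d2: "\<And>a b c. circ' a (b + c) = circ' a b + circ' a c"
   and d3: "\<And>r a b. circ' (r *\<^sub>R a) b = r *\<^sub>R circ' a b"
   and d4: "\<And>r a b. circ' a (r *\<^sub>R b) = r *\<^sub>R circ' a b"
   and di: "\<And>e1 e2. rho (circ' e1 e2) = vf_bracket (rho e1) (rho e2)"
   and dii: "\<And>e1 e2. ip (circ' e1 e1) e2 = (1/2) *\<^sub>R rho e2 (ip e1 e1)"
    using pc' by blast+
  have Dadd1: "D (a + b) c = D a c + D b c" for a b c by (simp add: D_def c1 d1)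
  have Dadd: "D a (b + c) = D a b + D a c" for a b c by (simp add: D_def c2 d2)
  have Dsc1: "D (r *\<^sub>R a) b = r *\<^sub>R D a b" for r a b by (simp add: D_def c3 d3 algebra_simps)
  have Dsc: "D a (r *\<^sub>R b) = r *\<^sub>R D a b" for r a b by (simp add: D_def c4 d4 algebra_simps)
  have Dneg: "D a (- b) = - D a b" for a b using Dsc[of a "-1" b] by simp
  have Dker: "rho (D a b) = (\<lambda>f. 0)" for a b
    by (rule ext) (simp add: D_def rhosub ci di)
  have Ddiag: "D e e = 0" for e
    by (rule nondeg) (simp add: D_def ipsub cii dii)
  have Das: "D y x = - D x y" for x y
  proof -
    have "D (x + y) (x + y) = 0" by (rule Ddiag)
    hence "D x x + D x y + (D y x + D y y) = 0" by (simp add: Dadd1 Dadd algebra_simps)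
    hence "D x y + D y x = 0" by (simp add: Ddiag)
    thus ?thesis by (simp add: eq_neg_iff_add_eq_0 add.commute)
  qed
  have Badd: "B a (b + c) = B a b + B a c" for a b c
    by (simp add: B_def lie2_bracket_def c1 c2 algebra_simps)
  have Badd1: "B (a + b) c = B a c + B b c" for a b c
    by (simp add: B_def lie2_bracket_def c1 c2 algebra_simps)
  have Bsc: "B a (r *\<^sub>R b) = r *\<^sub>R B a b" for r a b
    by (simp add: B_def lie2_bracket_def c3 c4 algebra_simps)
  have Bsc1: "B (r *\<^sub>R a) b = r *\<^sub>R B a b" for r a b
    by (simp add: B_def lie2_bracket_def c3 c4 algebra_simps)
  have Bneg: "B a (- b) = - B a b" for a b using Bsc[of a "-1" b] by simp
  have Bas: "B y x = - B x y" for x y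
    by (simp add: B_def lie2_bracket_def algebra_simps)
  have half: "(1/2::real) *\<^sub>R (a + a) = a" for a :: 'e
  proof -
    have "(1/2::real) *\<^sub>R (a + a) = ((1/2) + (1/2)::real) *\<^sub>R a" by (simp only: scaleR_add_right scaleR_add_left)
    thus ?thesis by simp
  qed
  have B': "lie2_bracket circ' = (\<lambda>x y. B x y + D x y)"
  proof (intro ext)
    fix x y
    have "lie2_bracket circ' x y = (1/2) *\<^sub>R (circ' x y - circ' y x)" by (simp add: lie2_bracket_def)
    also have "\<dots> = (1/2) *\<^sub>R (circ x y - circ y x) + (1/2) *\<^sub>R (D x y - D y x)"
      by (simp add: D_def algebra_simps)
    also have "\<dots> = B x y + D x y"
      using half[of "D x y"] by (simp add: Das[of x y] B_def lie2_bracket_def)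
    finally show "lie2_bracket circ' x y = B x y + D x y" .
  qed
  have lin: "linear_on UNIV (\<lambda>x. x)" by (simp add: linear_on_def)
  have linK: "linear_on {e. rho e = (\<lambda>f. 0)} (\<lambda>x. x)" by (simp add: linear_on_def)
  show ?thesis
    unfolding lie2_of_def lie2_isomorphic_def prod.case
  proof (intro exI[of _ "\<lambda>x. x"] exI[of _ "\<lambda>x. x"] exI[of _ D] conjI ballI)
    show "bij_betw (\<lambda>x. x) UNIV UNIV" by (simp add: bij_betw_def)
    show "bij_betw (\<lambda>x. x) {e. rho e = (\<lambda>f. 0)} {e. rho e = (\<lambda>f. 0)}" by (simp add: bij_betw_def)
  next
    fix x y assume "x \<in> (UNIV::'e set)" "y \<in> (UNIV::'e set)"
    show "D x y \<in> {e. rho e = (\<lambda>f. 0)}" by (simp add: Dker)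
  next
    fix y :: 'e show "linear_on UNIV (\<lambda>x. D x y)" by (simp add: linear_on_def Dadd1 Dsc1)
  next
    fix x :: 'e show "linear_on UNIV (\<lambda>y. D x y)" by (simp add: linear_on_def Dadd Dsc)
  next
    fix x y :: 'e
    show "lie2_bracket circ' x y - lie2_bracket circ x y = D x y" by (simp add: B' B_def)
  next
    fix x m :: 'e
    show "lie2_bracket circ' x m - lie2_bracket circ x m = D x m" by (simp add: B' B_def)
  next
    fix x m :: 'e
    show "- lie2_bracket circ' x m - - lie2_bracket circ x m = D m x" by (simp add: B' B_def Das[of m x])
  next
    fix x y z :: 'e
    show "lie2_l3 circ x y z + lie2_bracket circ' x (D y z) - lie2_bracket circ' y (D x z) -
          - lie2_bracket circ' z (D x y) - D (lie2_bracket circ x y) z + D x (lie2_bracket circ y z) -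
          D y (lie2_bracket circ x z) - lie2_l3 circ' x y z = 0"
      using jac_identity[of B D x y z, OF Badd Bneg Bas Dadd Dneg Das]
      unfolding lie2_l3_def B' B_def[symmetric] by (simp add: algebra_simps)
  qed (auto simp: lin linK)
qed

end
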